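(* Let $P=\{S_1,\ldots,S_n\}$ be a homothetic packing of $n$ squares with contact graph $G=([n],E)$. If $K,K'$ are two distinct cliques of $G$ each of size $4$, then $|K\cap K'|\le 2$.
   Context: Let $S=\{(x,y): -1\le x,y\le 1\}$. A homothetic packing of $n$ squares is a set $P=\{S_1,\ldots,S_n\}$ with $S_i=r_iS+p_i$, $r_i>0$, $p_i\in\mathbb{R}^2$, such that distinct squares have disjoint interiors. Its contact graph is $G=([n],E)$ where $\{i,j\}\in E$ iff $i\ne j$ and $S_i\cap S_j\ne\emptyset$. *)

theory Defs
  imports "HOL-Analysis.Analysis"
begin

definition unit_sq :: "(real \<times> real) set" where
  "unit_sq = {(x, y). -1 \<le> x \<and> x \<le> 1 \<and> -1 \<le> y \<and> y \<le> 1}"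

definition hsq :: "real \<Rightarrow> real \<times> real \<Rightarrow> (real \<times> real) set" where
  "hsq r p = (\<lambda>x. r *\<^sub>R x + p) ` unit_sq"

definition homothetic_packing :: "nat \<Rightarrow> (nat \<Rightarrow> real) \<Rightarrow> (nat \<Rightarrow> real \<times> real) \<Rightarrow> bool" where
  "homothetic_packing n r p \<longleftrightarrow>
     (\<forall>i<n. r i > 0) \<and>
     (\<forall>i<n. \<forall>j<n. i \<noteq> j \<longrightarrow> interior (hsq (r i) (p i)) \<inter> interior (hsq (r j) (p j)) = {})"

definition contact_edge :: "nat \<Rightarrow> (nat \<Rightarrow> real) \<Rightarrow> (nat \<Rightarrow> real \<times> real) \<Rightarrow> nat \<Rightarrow> nat \<Rightarrow> bool" where
  "contact_edge n r p i j \<longleftrightarrow> i < n \<and> j < n \<and> i \<noteq> j \<and> hsq (r i) (p i) \<inter> hsq (r j) (p j) \<noteq> {}"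

definition contact_clique :: "nat \<Rightarrow> (nat \<Rightarrow> real) \<Rightarrow> (nat \<Rightarrow> real \<times> real) \<Rightarrow> nat set \<Rightarrow> bool" where
  "contact_clique n r p K \<longleftrightarrow> K \<subseteq> {..<n} \<and>
     (\<forall>i\<in>K. \<forall>j\<in>K. i \<noteq> j \<longrightarrow> contact_edge n r p i j)"

end

theory Submission
  imports Defs
begin

lemma hsq_eq:
  assumes "r > 0"
  shows "hsq r p = {fst p - r..fst p + r} \<times> {snd p - r..snd p + r}"
proof (intro set_eqI iffI)
  fix z assume "z \<in> hsq r p"
  then obtain u v where uv: "-1 \<le> u" "u \<le> 1" "-1 \<le> v" "v \<le> 1" "z = r *\<^sub>R (u, v) + p"
    unfolding hsq_def unit_sq_def by auto
  have "r * u \<le> r" "- r \<le> r * u" "r * v \<le> r" "- r \<le> r * v"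
    using mult_left_mono[OF uv(2), of r] mult_left_mono[OF uv(1), of r]
      mult_left_mono[OF uv(4), of r] mult_left_mono[OF uv(3), of r] assms by simp_all
  then show "z \<in> {fst p - r..fst p + r} \<times> {snd p - r..snd p + r}"
    using uv by (cases p) auto
next
  fix z assume z: "z \<in> {fst p - r..fst p + r} \<times> {snd p - r..snd p + r}"
  obtain x y where xy: "z = (x, y)" by (cases z)
  define u where "u = (x - fst p) / r"
  define v where "v = (y - snd p) / r"
  have "-1 \<le> u \<and> u \<le> 1 \<and> -1 \<le> v \<and> v \<le> 1"
    using z xy assms by (auto simp: u_def v_def field_simps)
  moreover have "z = r *\<^sub>R (u, v) + p"
    using xy assms by (cases p) (simp add: u_def v_def)
  ultimately show "z \<in> hsq r p"
    unfolding hsq_def unit_sq_def by (intro image_eqI[where x="(u, v)"]) auto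
qed

lemma interior_hsq:
  assumes "r > 0"
  shows "interior (hsq r p) = {fst p - r<..<fst p + r} \<times> {snd p - r<..<snd p + r}"
  using assms by (simp add: hsq_eq interior_Times)

lemma edge_le:
  assumes "homothetic_packing n r p" "contact_edge n r p i j"
  shows "\<bar>fst (p i) - fst (p j)\<bar> \<le> r i + r j \<and> \<bar>snd (p i) - snd (p j)\<bar> \<le> r i + r j"
proof -
  have ri: "r i > 0" "r j > 0" using assms unfolding homothetic_packing_def contact_edge_def by auto
  obtain z where "z \<in> hsq (r i) (p i)" "z \<in> hsq (r j) (p j)"
    using assms(2) unfolding contact_edge_def by auto
  then show ?thesis using ri by (auto simp: hsq_eq abs_le_iff)
qed

lemma disj_ge:
  assumes "homothetic_packing n r p" "i < n" "j < n" "i \<noteq> j"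
  shows "\<bar>fst (p i) - fst (p j)\<bar> \<ge> r i + r j \<or> \<bar>snd (p i) - snd (p j)\<bar> \<ge> r i + r j"
proof (rule ccontr)
  assume c: "\<not> ?thesis"
  have ri: "r i > 0" "r j > 0" using assms unfolding homothetic_packing_def by auto
  have e: "interior (hsq (r i) (p i)) \<inter> interior (hsq (r j) (p j)) = {}"
    using assms unfolding homothetic_packing_def by auto
  define x where "x = (fst (p i) * r j + fst (p j) * r i) / (r i + r j)"
  define y where "y = (snd (p i) * r j + snd (p j) * r i) / (r i + r j)"
  have xe: "x - fst (p i) = (fst (p j) - fst (p i)) * r i / (r i + r j)"
       "x - fst (p j) = (fst (p i) - fst (p j)) * r j / (r i + r j)"
       "y - snd (p i) = (snd (p j) - snd (p i)) * r i / (r i + r j)"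
       "y - snd (p j) = (snd (p i) - snd (p j)) * r j / (r i + r j)"
    using ri by (auto simp: x_def y_def field_simps)
  have lt: "\<bar>a\<bar> < s \<Longrightarrow> s > 0 \<Longrightarrow> t > 0 \<Longrightarrow> \<bar>a * t / s\<bar> < t" for a s t :: real
    by (simp add: abs_mult abs_divide field_simps)
  have "\<bar>x - fst (p i)\<bar> < r i" "\<bar>x - fst (p j)\<bar> < r j"
       "\<bar>y - snd (p i)\<bar> < r i" "\<bar>y - snd (p j)\<bar> < r j"
    unfolding xe by (rule lt; use c ri in \<open>simp add: abs_minus_commute\<close>)+
  then have "(x, y) \<in> interior (hsq (r i) (p i)) \<inter> interior (hsq (r j) (p j))"
    using ri by (simp add: interior_hsq abs_less_iff)
  with e show False by auto
qed

lemma edge_full: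
  assumes P: "homothetic_packing n r p" and E: "contact_edge n r p i j"
  shows "\<bar>fst (p i) - fst (p j)\<bar> \<le> r i + r j \<and> \<bar>snd (p i) - snd (p j)\<bar> \<le> r i + r j \<and>
    (\<bar>fst (p i) - fst (p j)\<bar> \<ge> r i + r j \<or> \<bar>snd (p i) - snd (p j)\<bar> \<ge> r i + r j)"
  using edge_le[OF P E] disj_ge[OF P, of i j] E unfolding contact_edge_def by blast

lemma arith_core:
  fixes xa ya ra xb yb rb xc yc rc xd yd rd xe ye re :: real
  assumes "ra > 0" "rb > 0" "rc > 0" "rd > 0" "re > 0"
  and "\<bar>xa - xb\<bar> \<le> ra + rb \<and> \<bar>ya - yb\<bar> \<le> ra + rb \<and> (\<bar>xa - xb\<bar> \<ge> ra + rb \<or> \<bar>ya - yb\<bar> \<ge> ra + rb)"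
  and "\<bar>xa - xc\<bar> \<le> ra + rc \<and> \<bar>ya - yc\<bar> \<le> ra + rc \<and> (\<bar>xa - xc\<bar> \<ge> ra + rc \<or> \<bar>ya - yc\<bar> \<ge> ra + rc)"
  and "\<bar>xb - xc\<bar> \<le> rb + rc \<and> \<bar>yb - yc\<bar> \<le> rb + rc \<and> (\<bar>xb - xc\<bar> \<ge> rb + rc \<or> \<bar>yb - yc\<bar> \<ge> rb + rc)"
  and "\<bar>xa - xd\<bar> \<le> ra + rd \<and> \<bar>ya - yd\<bar> \<le> ra + rd \<and> (\<bar>xa - xd\<bar> \<ge> ra + rd \<or> \<bar>ya - yd\<bar> \<ge> ra + rd)"
  and "\<bar>xb - xd\<bar> \<le> rb + rd \<and> \<bar>yb - yd\<bar> \<le> rb + rd \<and> (\<bar>xb - xd\<bar> \<ge> rb + rd \<or> \<bar>yb - yd\<bar> \<ge> rb + rd)"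
  and "\<bar>xc - xd\<bar> \<le> rc + rd \<and> \<bar>yc - yd\<bar> \<le> rc + rd \<and> (\<bar>xc - xd\<bar> \<ge> rc + rd \<or> \<bar>yc - yd\<bar> \<ge> rc + rd)"
  and "\<bar>xa - xe\<bar> \<le> ra + re \<and> \<bar>ya - ye\<bar> \<le> ra + re \<and> (\<bar>xa - xe\<bar> \<ge> ra + re \<or> \<bar>ya - ye\<bar> \<ge> ra + re)"
  and "\<bar>xb - xe\<bar> \<le> rb + re \<and> \<bar>yb - ye\<bar> \<le> rb + re \<and> (\<bar>xb - xe\<bar> \<ge> rb + re \<or> \<bar>yb - ye\<bar> \<ge> rb + re)"
  and "\<bar>xc - xe\<bar> \<le> rc + re \<and> \<bar>yc - ye\<bar> \<le> rc + re \<and> (\<bar>xc - xe\<bar> \<ge> rc + re \<or> \<bar>yc - ye\<bar> \<ge> rc + re)"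
  and "\<bar>xd - xe\<bar> \<ge> rd + re \<or> \<bar>yd - ye\<bar> \<ge> rd + re"
  shows False
  using assms by (smt (z3))

lemma five_contra:
  assumes P: "homothetic_packing n r p"
  and ab: "contact_edge n r p a b" and ac: "contact_edge n r p a c" and bc: "contact_edge n r p b c"
  and ad: "contact_edge n r p a d" and bd: "contact_edge n r p b d" and cd: "contact_edge n r p c d"
  and ae: "contact_edge n r p a e" and be: "contact_edge n r p b e" and ce: "contact_edge n r p c e"
  and dn: "d < n" "e < n" and de: "d \<noteq> e"
  shows False
proof -
  have pos: "r a > 0" "r b > 0" "r c > 0" "r d > 0" "r e > 0"
    using P ab ac ad ae unfolding homothetic_packing_def contact_edge_def by auto
  show False
    by (rule arith_core[OF pos edge_full[OF P ab] edge_full[OF P ac] edge_full[OF P bc]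
       edge_full[OF P ad] edge_full[OF P bd] edge_full[OF P cd]
       edge_full[OF P ae] edge_full[OF P be] edge_full[OF P ce] disj_ge[OF P dn de]])
qed

theorem lemma10:
  fixes n :: nat and r :: "nat \<Rightarrow> real" and p :: "nat \<Rightarrow> real \<times> real"
    and K K' :: "nat set"
  assumes "homothetic_packing n r p"
    and "contact_clique n r p K" and "card K = 4"
    and "contact_clique n r p K'" and "card K' = 4"
    and "K \<noteq> K'"
  shows "card (K \<inter> K') \<le> 2"
proof (rule ccontr)
  assume c: "\<not> ?thesis"
  have fK: "finite K" "finite K'" using assms(3,5) card.infinite by force+
  have "\<not> K \<subseteq> K'"
    using fK assms(3,5,6) card_subset_eq by metis
  then obtain d where d: "d \<in> K" "d \<notin> K'" by auto
  have "\<not> K' \<subseteq> K"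
    using fK assms(3,5,6) card_subset_eq by metis
  then obtain e where e: "e \<in> K'" "e \<notin> K" by auto
  have "3 \<le> card (K \<inter> K')" using c by simp
  then obtain T where T: "T \<subseteq> K \<inter> K'" "card T = 3"
    using obtain_subset_with_card_n by metis
  then obtain a b cc where abc: "T = {a, b, cc}" "a \<noteq> b" "a \<noteq> cc" "b \<noteq> cc"
    using card_3_iff by metis
  have inK: "a \<in> K" "b \<in> K" "cc \<in> K" "a \<in> K'" "b \<in> K'" "cc \<in> K'" using T abc by auto
  have CK: "\<And>i j. i \<in> K \<Longrightarrow> j \<in> K \<Longrightarrow> i \<noteq> j \<Longrightarrow> contact_edge n r p i j"
    using assms(2) unfolding contact_clique_def by auto
  have CK': "\<And>i j. i \<in> K' \<Longrightarrow> j \<in> K' \<Longrightarrow> i \<noteq> j \<Longrightarrow> contact_edge n r p i j"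
    using assms(4) unfolding contact_clique_def by auto
  have dn: "d < n" "e < n" using d e assms(2,4) unfolding contact_clique_def by auto
  have ne: "a \<noteq> d" "b \<noteq> d" "cc \<noteq> d" "a \<noteq> e" "b \<noteq> e" "cc \<noteq> e" "d \<noteq> e"
    using d e inK by auto
  show False
    by (rule five_contra[OF assms(1) CK[OF inK(1) inK(2) abc(2)] CK[OF inK(1) inK(3) abc(3)]
      CK[OF inK(2) inK(3) abc(4)] CK[OF inK(1) d(1) ne(1)] CK[OF inK(2) d(1) ne(2)]
      CK[OF inK(3) d(1) ne(3)] CK'[OF inK(4) e(1) ne(4)] CK'[OF inK(5) e(1) ne(5)]
      CK'[OF inK(6) e(1) ne(6)] dn ne(7)])
qed

end
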